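(* For all real $x\ge4$, $H'(x)>\dfrac{H(x)\log(H(x))}{x^2}$.
   Context: $H(x)=\int_0^1\frac{t^x-1}{t-1}\,dt$ for real $x\ge1$; it is smooth, satisfies $H(n)=1+\frac12+\cdots+\frac1n$ for $n\in\mathbb{N}$, and $H(x)=\psi(x+1)+\gamma$ with $\psi=\Gamma'/\Gamma$ the digamma function, so $H'(x)=\psi'(x+1)$. *)

theory Defs
  imports "HOL-Analysis.Analysis"
begin

definition H :: "real \<Rightarrow> real" where
  "H x = integral {0..1} (\<lambda>t. (t powr x - 1) / (t - 1))"

end

theory Submission imports Defs begin

lemma int_pow: "((\<lambda>t::real. t^i) has_integral (1/(real i+1))) {0..1}"
proof -
  have "((\<lambda>t::real. t^i) has_integral (1^Suc i/(Suc i) - 0^Suc i/(Suc i))) {0..1}"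
    apply (rule fundamental_theorem_of_calculus) 
    apply (auto intro!: derivative_eq_intros simp: has_real_derivative_iff_has_vector_derivative[symmetric])
    apply (cases i) apply (auto simp: field_simps)
    done
  thus ?thesis by (simp add: add.commute)
qed

lemma int_powr: "x \<ge> 0 \<Longrightarrow> ((\<lambda>t::real. t powr (real i + x)) has_integral (1/(real i + x + 1))) {0..1}"
  using has_integral_powr_from_0[of "real i + x" 1] by simp

lemma powr_split: "(t::real) \<ge> 0 \<Longrightarrow> t powr (real i + x) = t^i * t powr x"
proof (cases "t = 0")
  case False
  assume "t \<ge> 0" hence "t > 0" using False by simp
  thus ?thesis by (simp add: powr_add powr_realpow)
qed simp

lemma H_Digamma:
  assumes x: "x > 0"
  shows "H x = Digamma (x + 1) + euler_mascheroni"
proof -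
  define f where "f = (\<lambda>k (t::real). \<Sum>i<k. t^i - t powr (real i + x))"
  define a where "a = (\<lambda>i::nat. inverse (real (Suc i)) - inverse ((x+1) + real i))"
  define g where "g = (\<lambda>t::real. (t powr x - 1) / (t - 1))"
  have fi: "(f k has_integral (\<Sum>i<k. a i)) {0..1}" for k
    unfolding f_def a_def
  proof (rule has_integral_sum, simp)
    fix i
    have "((\<lambda>t. t ^ i - t powr (real i + x)) has_integral (1/(real i+1) - 1/(real i + x + 1))) {0..1}"
      using x by (intro has_integral_diff int_pow int_powr) auto
    thus "((\<lambda>xa. xa ^ i - xa powr (real i + x)) has_integral
          inverse (real (Suc i)) - inverse (x + 1 + real i)) {0..1}"
      by (simp add: inverse_eq_divide add_ac)
  qed
  have mono: "f k t \<le> f (Suc k) t" if "t \<in> {0..1}" for k t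
  proof -
    have "t powr x \<le> 1" using powr_mono2[of x t 1] that x by auto
    hence "t^k * t powr x \<le> t^k" using that by (simp add: mult_left_le)
    thus ?thesis using that unfolding f_def by (simp add: powr_split)
  qed
  have conv: "(\<lambda>k. f k t) \<longlonglongrightarrow> g t" if "t \<in> {0..1}" for t
  proof (cases "t = 1")
    case True thus ?thesis by (simp add: f_def g_def)
  next
    case False
    hence t: "0 \<le> t" "t < 1" using that by auto
    have eq: "f k t = (1 - t powr x) * (\<Sum>i<k. t^i)" for k
      unfolding f_def sum_distrib_left
    proof (rule sum.cong)
      fix i show "t ^ i - t powr (real i + x) = (1 - t powr x) * t^i"
        using powr_split[of t i x] t by (simp add: algebra_simps)
    qed simp
    have "(\<lambda>i. t^i) sums (1/(1-t))" using t by (intro geometric_sums) auto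
    hence "(\<lambda>k. \<Sum>i<k. t^i) \<longlonglongrightarrow> 1/(1-t)" by (simp add: sums_def)
    hence "(\<lambda>k. (1 - t powr x) * (\<Sum>i<k. t^i)) \<longlonglongrightarrow> (1 - t powr x) * (1/(1-t))"
      by (intro tendsto_mult_left)
    also have "(1 - t powr x) * (1/(1-t)) = g t" using t unfolding g_def
      by (simp add: field_simps)
    finally show ?thesis by (simp add: eq)
  qed
  have sa: "(\<lambda>k. \<Sum>i<k. a i) \<longlonglongrightarrow> Digamma (x + 1) + euler_mascheroni"
  proof -
    have "a sums (Digamma (x+1) + euler_mascheroni)"
      using summable_Digamma[of "x+1"] x unfolding a_def
      by (simp add: Digamma_def summable_sums)
    thus ?thesis by (simp add: sums_def)
  qed
  have bnd: "bounded (range (\<lambda>k. integral {0..1} (f k)))"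
      proof -
    have "(\<lambda>k. integral {0..1} (f k)) = (\<lambda>k. \<Sum>i<k. a i)" using integral_unique[OF fi] by simp
    thus ?thesis using convergent_imp_bounded[OF sa] by (simp only:)
  qed
  from monotone_convergence_increasing[of f "{0..1}" g, OF _ mono conv bnd] fi
  have "(\<lambda>k. integral {0..1} (f k)) \<longlonglongrightarrow> integral {0..1} g"
    by blast
  hence "(\<lambda>k. \<Sum>i<k. a i) \<longlonglongrightarrow> integral {0..1} g"
    using integral_unique[OF fi] by simp
  with sa have "integral {0..1} g = Digamma (x + 1) + euler_mascheroni"
    by (rule LIMSEQ_unique[rotated])
  thus ?thesis by (simp add: H_def g_def)
qed

lemma deriv_H: assumes x: "x > 0" shows "deriv H x = Polygamma 1 (x + 1)"
proof -
  have "((\<lambda>y. Digamma (y+1) + euler_mascheroni) has_field_derivative Polygamma 1 (x+1)) (at x)"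
  proof -
    have nz: "x + 1 \<notin> \<int>\<^sub>\<le>\<^sub>0" using x by (auto elim!: nonpos_Ints_cases)
    have d1: "(Digamma has_field_derivative Polygamma 1 (x+1)) (at (x+1))"
      using has_field_derivative_Polygamma[OF nz, of 0 UNIV] by simp
    have d2: "((\<lambda>y. y+1) has_field_derivative 1) (at x)" by (auto intro!: derivative_eq_intros)
    from DERIV_add[OF DERIV_chain2[OF d1 d2] DERIV_const[of euler_mascheroni]]
    show ?thesis by simp
  qed
  hence "(H has_field_derivative Polygamma 1 (x+1)) (at x)"
    by (rule has_field_derivative_transform_within_open[where S="{0<..}"]) (use x H_Digamma in auto)
  thus ?thesis by (rule DERIV_imp_deriv)
qed

lemma Polygamma1_ge: assumes z: "(z::real) > 0" shows "Polygamma 1 z \<ge> 1 / z"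
proof -
  have s1: "(\<lambda>k. inverse ((z + real k)^2)) sums Polygamma 1 z"
    using Polygamma_LIMSEQ[of z 1] z by (simp add: numeral_2_eq_2)
  have lim: "(\<lambda>n. inverse (z + real n)) \<longlonglongrightarrow> 0" by (intro tendsto_inverse_0_at_top filterlim_tendsto_add_at_top[OF tendsto_const] filterlim_real_sequentially)
  have s2: "(\<lambda>n. inverse (z + real n) - inverse (z + real (Suc n))) sums (inverse (z + real 0) - 0)"
    by (rule telescope_sums'[OF lim])
  have le: "inverse (z + real n) - inverse (z + real (Suc n)) \<le> inverse ((z + real n)^2)" for n
  proof -
    have p: "z + real n > 0" using z by simp
    have "inverse (z + real n) - inverse (z + real (Suc n)) = 1 / ((z + real n) * (z + real n + 1))"
      using p by (simp add: field_simps)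
    also have "\<dots> \<le> 1 / ((z + real n) * (z + real n))"
      using p by (intro divide_left_mono mult_left_mono) auto
    finally show ?thesis by (simp add: power2_eq_square inverse_eq_divide)
  qed
  from sums_le[OF le s2 s1] show ?thesis by (simp add: inverse_eq_divide)
qed

lemma H_bounds: assumes x: "x \<ge> 1" shows "H x \<ge> 1" "H x \<le> ln (x + 1) + 1"
proof -
  have Hx: "H x = Digamma (x + 1) + euler_mascheroni" using x H_Digamma by simp
  have "Digamma (real (Suc 1)) \<le> Digamma (x + 1)"
    using x by (intro Digamma_real_mono) auto
  hence "harm 1 - euler_mascheroni \<le> Digamma (x+1)" by (simp only: Digamma_of_nat)
  thus "H x \<ge> 1" using Hx by (simp add: harm_def)
  define n where "n = nat \<lceil>x\<rceil>"
  have n1: "n \<ge> 1" and nx: "x \<le> real n" and nx2: "real n < x + 1" using x unfolding n_def by linarith+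
  have "Digamma (x + 1) \<le> Digamma (real (Suc n))"
    using x nx by (intro Digamma_real_mono) auto
  hence "H x \<le> harm n" using Hx by (simp only: Digamma_of_nat)
  also have "harm n \<le> ln (real n) + 1"
    using euler_mascheroni_sequence_decreasing[of 1 n] n1 by (simp add: harm_def)
  also have "ln (real n) \<le> ln (x + 1)" using n1 nx2 by simp
  finally show "H x \<le> ln (x + 1) + 1" by simp
qed

lemma ln_le_div_e: "(y::real) > 0 \<Longrightarrow> ln y \<le> y / exp 1"
  using ln_le_minus_one[of "y / exp 1"] by (simp add: ln_div)

lemma aux_sq: "0 \<le> (P::real) \<Longrightarrow> P < 4.436 * Q \<Longrightarrow> P^2 < 19.683 * Q^2"
proof -
  assume a: "0 \<le> P" "P < 4.436 * Q"
  have "P^2 < (4.436*Q)^2" using a by (intro power_strict_mono) auto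
  also have "(4.436*Q)^2 = 19.678096 * Q^2" by (simp add: power2_eq_square algebra_simps)
  also have "\<dots> \<le> 19.683 * Q^2" by (intro mult_right_mono) auto
  finally show ?thesis .
qed

lemma final_ineq: assumes y: "(y::real) \<ge> 5" shows "(ln y + 1)^2 * y < exp 1 * (y - 1)^2"
proof -
  define s where "s = sqrt y"
  define e where "e = exp (1::real)"
  define L where "L = ln y"
  have ss: "s * s = y" "s \<ge> 0" using y by (auto simp: s_def)
  have s2: "s \<ge> 2.2" proof (rule ccontr)
    assume "\<not> s \<ge> 2.2" hence "s * s < 2.2 * 2.2" using ss by (intro mult_strict_mono) auto
    thus False using ss y by simp
  qed
  have eb: "e \<ge> 2.7" "e \<le> 2.72" using e_approx_32 unfolding e_def abs_le_iff by auto
  have "ln s \<le> s / e" using ln_le_div_e[of s] s2 unfolding e_def by simp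
  moreover have "ln s = L / 2" using y by (simp add: s_def L_def ln_sqrt)
  ultimately have "e * L \<le> 2 * s" using eb by (simp add: field_simps)
  have L0: "L \<ge> 0" using y by (simp add: L_def)
  have A: "e * (L + 1) \<le> 2 * s + 2.72" using \<open>e * L \<le> 2 * s\<close> eb by (simp add: algebra_simps)
  have A2: "(e * (L + 1))^2 * y \<le> (2 * s + 2.72)^2 * y"
    using A L0 eb y by (intro mult_right_mono power_mono) auto
  have B: "(2 * s + 2.72)^2 * y < 19.683 * (y - 1)^2"
  proof -
    have "(2 * s + 2.72) * s < 4.436 * (s * s - 1)" using s2 mult_right_mono[OF s2, of s] ss by (simp add: algebra_simps)
    hence "((2 * s + 2.72) * s)^2 < 19.683 * (s * s - 1)^2"
      using s2 by (intro aux_sq) (auto intro!: mult_nonneg_nonneg)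
    moreover have "(2 * s + 2.72)^2 * y = ((2 * s + 2.72) * s)^2" "y - 1 = s * s - 1"
      using ss by (simp_all add: power_mult_distrib power2_eq_square)
    ultimately show ?thesis by simp
  qed
  have C: "19.683 * (y - 1)^2 \<le> e^3 * (y-1)^2"
  proof (rule mult_right_mono)
    have "(2.7::real)^3 \<le> e^3" using eb by (intro power_mono) auto
    moreover have "(2.7::real)^3 = 19.683" by (simp add: power3_eq_cube)
    ultimately show "19.683 \<le> e^3" by simp
  qed simp
  have "e^2 * ((L + 1)^2 * y) = (e * (L + 1))^2 * y" by (simp add: power_mult_distrib)
  also have "\<dots> \<le> (2 * s + 2.72)^2 * y" by (rule A2)
  also have "\<dots> < 19.683 * (y - 1)^2" by (rule B)
  also have "\<dots> \<le> e^3 * (y-1)^2" by (rule C)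
  also have "\<dots> = e^2 * (e * (y - 1)^2)" by (simp add: power3_eq_cube power2_eq_square)
  finally have "e^2 * ((L + 1)^2 * y) < e^2 * (e * (y - 1)^2)" .
  hence "(L + 1)^2 * y < e * (y - 1)^2" using eb by (simp add: mult_less_cancel_left)
  thus ?thesis by (simp add: L_def e_def)
qed

theorem mainTheorem16:
  fixes x :: real
  assumes "x \<ge> 4"
  shows "deriv H x > H x * ln (H x) / x ^ 2"
proof -
  have x: "x \<ge> 4" by fact
  define h where "h = H x"
  define L where "L = ln (x + 1)"
  have h1: "h \<ge> 1" and h2: "h \<le> L + 1" using H_bounds[of x] x by (auto simp: h_def L_def)
  have L0: "L \<ge> 0" using x by (simp add: L_def)
  have e0: "exp (1::real) > 0" by simp
  have "h * ln h \<le> h * (h / exp 1)" using h1 ln_le_div_e[of h] by (intro mult_left_mono) auto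
  also have "\<dots> = h^2 / exp 1" by (simp add: power2_eq_square)
  also have "\<dots> \<le> (L + 1)^2 / exp 1" using h1 h2 by (intro divide_right_mono power_mono) auto
  finally have hl: "h * ln h \<le> (L + 1)^2 / exp 1" .
  have fi: "(L + 1)^2 * (x + 1) < exp 1 * x^2"
    using final_ineq[of "x+1"] x by (simp add: L_def)
  have x2: "x^2 > 0" using x by simp
  have "h * ln h / x^2 \<le> (L + 1)^2 / exp 1 / x^2" using hl x2 by (intro divide_right_mono) auto
  also have "\<dots> < 1 / (x + 1)"
    using fi x2 x e0 by (simp add: field_simps)
  also have "\<dots> \<le> Polygamma 1 (x + 1)" using Polygamma1_ge[of "x+1"] x by simp
  also have "\<dots> = deriv H x" using deriv_H[of x] x by simp
  finally show ?thesis by (simp add: h_def)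
qed

end
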